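(* Let $n_0>3$ be a constant and consider on $u>0,q>0$ the system $$\frac{du}{d\xi}=u(3-u-n_0q),\qquad \frac{dq}{d\xi}=q(-1+u+q).$$ Define $$\Psi=(uq)^{\frac{2}{n_0-1}}\Big(\frac{n_0-5}{(n_0-1)^2}+\frac{2q}{n_0-1}-\frac{q^2}{2}-\frac{qu}{n_0+1}\Big).$$ Then along solutions $$\frac{d\Psi}{d\xi}=(n_0-5)(n_0-1)^{-3}(uq)^{\frac{2}{n_0-1}}\big((n_0-1)q-2\big)^2.$$ Consequently, for $n_0\neq5$, $\Psi$ is monotone along orbits and the only possible $\omega$-limit set (resp. $\alpha$-limit set) contained in the open quadrant $u,q>0$ is the fixed point $(u,q)=\big(\frac{n_0-3}{n_0-1},\frac{2}{n_0-1}\big)$.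
   Context: This is the equation system for the exact polytrope $\rho\propto\eta^{n_0}$, written in the homology invariants $u=4\pi r^3\rho/m$ and $q=m/(r\eta)$ with independent variable $\xi=\ln r$, where $\eta=\int_0^p dp'/\rho(p')$ and $dm/dr=4\pi r^2\rho$, $dp/dr=-m\rho/r^2$. *)

theory Defs
  imports "HOL-Analysis.Analysis"
begin

definition Psi :: "real \<Rightarrow> real \<Rightarrow> real \<Rightarrow> real" where
  "Psi n0 u q = (u * q) powr (2 / (n0 - 1)) *
     ((n0 - 5) / (n0 - 1)^2 + 2 * q / (n0 - 1) - q^2 / 2 - q * u / (n0 + 1))"

definition omega_limit :: "real set \<Rightarrow> (real \<Rightarrow> real) \<Rightarrow> (real \<Rightarrow> real) \<Rightarrow> (real \<times> real) set" where
  "omega_limit I u q = {p. \<exists>t :: nat \<Rightarrow> real. (\<forall>k. t k \<in> I) \<and> filterlim t at_top sequentially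
       \<and> ((\<lambda>k. (u (t k), q (t k))) \<longlonglongrightarrow> p)}"

definition alpha_limit :: "real set \<Rightarrow> (real \<Rightarrow> real) \<Rightarrow> (real \<Rightarrow> real) \<Rightarrow> (real \<times> real) set" where
  "alpha_limit I u q = {p. \<exists>t :: nat \<Rightarrow> real. (\<forall>k. t k \<in> I) \<and> filterlim t at_bot sequentially
       \<and> ((\<lambda>k. (u (t k), q (t k))) \<longlonglongrightarrow> p)}"

end

theory Submission
  imports Defs
begin

lemma key:
  fixes n u q :: real assumes "n > 3"
  shows "2/(n-1)*(2-(n-1)*q)*((n - 5) / (n - 1)^2 + 2 * q / (n - 1) - q^2 / 2 - q * u / (n + 1))
     + (- q/(n+1)) * (u*(3-u-n*q)) + (2/(n-1) - q - u/(n+1)) * (q*(-1+u+q))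
     = (n-5)/(n-1)^3 * ((n-1)*q-2)^2"
proof -
  define i where "i = 1/(n-1)"
  define j where "j = 1/(n+1)"
  have hi: "(n-1)*i = 1" "(n+1)*j = 1" using assms by (auto simp: i_def j_def)
  have e: "2/(n-1) = 2*i" "(n - 5) / (n - 1)^2 = (n-5)*i^2" "2 * q / (n - 1) = 2*q*i"
     "q * u / (n + 1) = q*u*j" "- q/(n+1) = -q*j" "u/(n+1) = u*j" "(n-5)/(n-1)^3 = (n-5)*i^3"
    by (simp_all add: i_def j_def field_simps power2_eq_square power3_eq_cube)
  show ?thesis unfolding e using hi by algebra
qed
lemma dpsi:
  fixes n0 :: real and u q :: "real \<Rightarrow> real"
  assumes n0: "n0 > 3" and pos: "u x > 0" "q x > 0"
    and du: "(u has_real_derivative u x * (3 - u x - n0 * q x)) (at x)"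
    and dq: "(q has_real_derivative q x * (-1 + u x + q x)) (at x)"
  shows "((\<lambda>x. Psi n0 (u x) (q x)) has_real_derivative
            (n0 - 5) * (n0 - 1) powr (-3) * (u x * q x) powr (2 / (n0 - 1))
              * ((n0 - 1) * q x - 2)^2) (at x)"
proof -
  define a where "a = 2/(n0-1)"
  have w: "((\<lambda>x. u x * q x) has_real_derivative (u x * q x) * (2 - (n0-1)*q x)) (at x)"
    using DERIV_mult[OF du dq] by (simp add: algebra_simps)
  have wp: "u x * q x > 0" using pos by simp
  have p: "((\<lambda>x. (u x * q x) powr a) has_real_derivative (u x * q x) powr a * (a * (2 - (n0-1)*q x))) (at x)"
    apply (rule DERIV_cong[OF DERIV_powr[OF w wp DERIV_const[of a]]])
    using wp by (simp add: divide_simps)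
  define c1 where "c1 = (n0 - 5) / (n0 - 1)^2"
  define c2 where "c2 = 2/(n0-1)"
  define j where "j = 1/(n0+1)"
  define G where "G = (\<lambda>u q. c1 + c2 * q - q^2 / 2 - q * u * j)"
  have g: "((\<lambda>x. G (u x) (q x)) has_real_derivative
      (- q x*j) * (u x*(3-u x-n0*q x)) + (c2 - q x - u x*j) * (q x*(-1+u x+q x))) (at x)"
    unfolding G_def
    by (auto intro!: derivative_eq_intros du dq simp: field_simps power2_eq_square)
  have c: "(n0 - 1) powr (-3) = 1/(n0-1)^3" using n0 by (simp add: powr_minus powr_numeral divide_simps)
  have Pe: "Psi n0 = (\<lambda>u q. (u*q) powr a * G u q)" unfolding Psi_def G_def a_def c1_def c2_def j_def
    by (intro ext) simp
  have k: "a * (2 - (n0-1)*q x) * G (u x) (q x) + ((- q x*j) * (u x*(3-u x-n0*q x)) + (c2 - q x - u x*j) * (q x*(-1+u x+q x)))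
     = (n0 - 5) * (n0 - 1) powr (-3) * ((n0 - 1) * q x - 2)^2"
    using key[OF n0, of "q x" "u x"] unfolding c a_def G_def c1_def c2_def j_def
    by (simp add: mult.commute)
  have "((\<lambda>x. (u x * q x) powr a * G (u x) (q x)) has_real_derivative
     (u x * q x) powr a * (a * (2 - (n0-1)*q x) * G (u x) (q x) + ((- q x*j) * (u x*(3-u x-n0*q x)) + (c2 - q x - u x*j) * (q x*(-1+u x+q x))))) (at x)"
    by (rule DERIV_cong[OF DERIV_mult[OF p g]]) (simp add: algebra_simps)
  then have "((\<lambda>x. (u x * q x) powr a * G (u x) (q x)) has_real_derivative
     (u x * q x) powr a * ((n0 - 5) * (n0 - 1) powr (-3) * ((n0 - 1) * q x - 2)^2)) (at x)"
    unfolding k .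
  moreover note Pe
  ultimately show ?thesis unfolding a_def by (simp add: mult_ac)
qed


lemma interval_sub:
  fixes I :: "real set"
  assumes "is_interval I" "x \<in> I" "y \<in> I"
  shows "{x..y} \<subseteq> I"
proof
  fix t assume "t \<in> {x..y}"
  then show "t \<in> I" by (intro mem_is_interval_1_I[OF assms(1,2,3)]) auto
qed

lemma cont_bound:
  fixes f :: "'a::topological_space \<Rightarrow> real"
  assumes "compact K" "continuous_on K f"
  shows "\<exists>M>0. \<forall>x\<in>K. \<bar>f x\<bar> \<le> M"
proof -
  have "bounded (f ` K)" using compact_continuous_image[OF assms(2,1)] compact_imp_bounded by blast
  then obtain B where "\<forall>y\<in>f ` K. norm y \<le> B" unfolding bounded_iff by blast
  then have "\<forall>x\<in>K. \<bar>f x\<bar> \<le> \<bar>B\<bar> + 1" by fastforce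
  then show ?thesis by (intro exI[of _ "\<bar>B\<bar> + 1"]) auto
qed

lemma box_dist:
  fixes x :: "real \<times> real"
  assumes "\<bar>fst x - a\<bar> \<le> d" "\<bar>snd x - b\<bar> \<le> d"
  shows "dist x (a, b) \<le> 2 * d"
proof -
  obtain x1 x2 where x: "x = (x1, x2)" by (cases x)
  have "dist x (a,b) = sqrt ((x1 - a)^2 + (x2 - b)^2)" unfolding x dist_Pair_Pair dist_real_def by simp
  also have "\<dots> \<le> \<bar>x1 - a\<bar> + \<bar>x2 - b\<bar>" by (rule sqrt_sum_squares_le_sum_abs)
  finally show ?thesis using assms x by simp
qed

lemma box_stay:
  fixes I :: "real set" and u q :: "real \<Rightarrow> real" and U Q :: "real \<times> real \<Rightarrow> real"
  assumes Iint: "is_interval I"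
    and du: "\<And>t. t \<in> I \<Longrightarrow> (u has_real_derivative U (u t, q t)) (at t)"
    and dq: "\<And>t. t \<in> I \<Longrightarrow> (q has_real_derivative Q (u t, q t)) (at t)"
    and d: "\<delta> > 0" and M: "M > 0"
    and bnd: "\<And>x. \<bar>fst x - a\<bar> \<le> 2*\<delta> \<Longrightarrow> \<bar>snd x - b\<bar> \<le> 2*\<delta> \<Longrightarrow> \<bar>U x\<bar> \<le> M \<and> \<bar>Q x\<bar> \<le> M"
    and t0: "t0 \<in> I" "t0 + \<delta>/M \<in> I"
    and c0: "\<bar>u t0 - a\<bar> < \<delta>" "\<bar>q t0 - b\<bar> < \<delta>"
  shows "\<forall>t\<in>{t0..t0+\<delta>/M}. \<bar>u t - a\<bar> < 2*\<delta> \<and> \<bar>q t - b\<bar> < 2*\<delta>"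
proof (rule ccontr)
  define h where "h = \<delta>/M"
  have hpos: "h > 0" using d M by (simp add: h_def)
  have sub: "{t0..t0+h} \<subseteq> I" using interval_sub[OF Iint t0] h_def by simp
  have cu: "continuous_on {t0..t0+h} u"
    by (rule continuous_at_imp_continuous_on) (use sub du DERIV_isCont in blast)
  have cq: "continuous_on {t0..t0+h} q"
    by (rule continuous_at_imp_continuous_on) (use sub dq DERIV_isCont in blast)
  define B where "B = {t\<in>{t0..t0+h}. \<bar>u t - a\<bar> \<ge> 2*\<delta> \<or> \<bar>q t - b\<bar> \<ge> 2*\<delta>}"
  assume "\<not> (\<forall>t\<in>{t0..t0+\<delta>/M}. \<bar>u t - a\<bar> < 2*\<delta> \<and> \<bar>q t - b\<bar> < 2*\<delta>)"
  then obtain t where "t \<in> {t0..t0+h}" "\<not> (\<bar>u t - a\<bar> < 2*\<delta> \<and> \<bar>q t - b\<bar> < 2*\<delta>)"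
    unfolding h_def by blast
  then have "t \<in> B" unfolding B_def by auto
  then have Bne: "B \<noteq> {}" by blast
  have T1: "closed {y::real. 2*\<delta> \<le> \<bar>y - a\<bar>}"
    by (intro closed_Collect_le continuous_intros)
  have T2: "closed {y::real. 2*\<delta> \<le> \<bar>y - b\<bar>}"
    by (intro closed_Collect_le continuous_intros)
  have "B = ({t0..t0+h} \<inter> u -` {y. 2*\<delta> \<le> \<bar>y - a\<bar>}) \<union> ({t0..t0+h} \<inter> q -` {y. 2*\<delta> \<le> \<bar>y - b\<bar>})"
    unfolding B_def by auto
  then have Bcl: "closed B"
    using continuous_closed_preimage[OF cu closed_atLeastAtMost T1]
      continuous_closed_preimage[OF cq closed_atLeastAtMost T2] by auto
  have Bbdd: "bdd_below B" unfolding B_def by (rule bdd_belowI[of _ t0]) auto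
  define t1 where "t1 = Inf B"
  have t1B: "t1 \<in> B" unfolding t1_def by (rule closed_contains_Inf[OF Bne Bbdd Bcl])
  have notB: "t \<notin> B" if "t < t1" for t
    using that cInf_lower[OF _ Bbdd] unfolding t1_def by force
  have t1r: "t0 \<le> t1" "t1 \<le> t0 + h" using t1B unfolding B_def by auto
  have "t0 \<notin> B" using c0 d unfolding B_def by auto
  then have lt: "t0 < t1" using t1B t1r by (cases "t0 = t1") auto
  have inK: "\<bar>U (u z, q z)\<bar> \<le> M \<and> \<bar>Q (u z, q z)\<bar> \<le> M" if "t0 < z" "z < t1" for z
  proof -
    have "z \<in> {t0..t0+h}" using that t1r by auto
    with notB[OF that(2)] have "\<bar>u z - a\<bar> < 2*\<delta>" "\<bar>q z - b\<bar> < 2*\<delta>" unfolding B_def by auto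
    then show ?thesis using bnd[of "(u z, q z)"] by simp
  qed
  have inI: "x \<in> I" if "t0 \<le> x" "x \<le> t1" for x using that sub t1r by auto
  obtain z1 where z1: "t0 < z1" "z1 < t1" "u t1 - u t0 = (t1 - t0) * U (u z1, q z1)"
    using MVT2[OF lt, of u "\<lambda>t. U (u t, q t)"] du inI by blast
  obtain z2 where z2: "t0 < z2" "z2 < t1" "q t1 - q t0 = (t1 - t0) * Q (u z2, q z2)"
    using MVT2[OF lt, of q "\<lambda>t. Q (u t, q t)"] dq inI by blast
  have hM: "h * M = \<delta>" using M by (simp add: h_def)
  have "\<bar>u t1 - u t0\<bar> \<le> (t1 - t0) * M" using z1 inK[OF z1(1,2)] lt
    by (simp add: abs_mult mult_left_mono)
  also have "\<dots> \<le> h * M" using t1r M by (intro mult_right_mono) auto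
  finally have A: "\<bar>u t1 - u t0\<bar> \<le> \<delta>" using hM by simp
  have "\<bar>q t1 - q t0\<bar> \<le> (t1 - t0) * M" using z2 inK[OF z2(1,2)] lt
    by (simp add: abs_mult mult_left_mono)
  also have "\<dots> \<le> h * M" using t1r M by (intro mult_right_mono) auto
  finally have C: "\<bar>q t1 - q t0\<bar> \<le> \<delta>" using hM by simp
  have "\<bar>u t1 - a\<bar> < 2*\<delta>" "\<bar>q t1 - b\<bar> < 2*\<delta>" using A C c0 by linarith+
  then show False using t1B unfolding B_def by auto
qed


lemma ball_box:
  fixes S :: "(real \<times> real) set"
  assumes "open S" "p \<in> S" "\<exists>e>0. \<forall>x. dist x p < e \<longrightarrow> P x"
  shows "\<exists>\<delta>>0. \<forall>x. \<bar>fst x - fst p\<bar> \<le> 2*\<delta> \<and> \<bar>snd x - snd p\<bar> \<le> 2*\<delta> \<longrightarrow> x \<in> S \<and> P x"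
proof -
  obtain e0 where e0: "e0 > 0" "ball p e0 \<subseteq> S" using assms(1,2) open_contains_ball by blast
  obtain e1 where e1: "e1 > 0" "\<forall>x. dist x p < e1 \<longrightarrow> P x" using assms(3) by blast
  define \<delta> where "\<delta> = min e0 e1 / 5"
  have dp: "\<delta> > 0" using e0 e1 by (simp add: \<delta>_def)
  have "x \<in> S \<and> P x" if "\<bar>fst x - fst p\<bar> \<le> 2*\<delta>" "\<bar>snd x - snd p\<bar> \<le> 2*\<delta>" for x
  proof -
    have "dist x (fst p, snd p) \<le> 2 * (2*\<delta>)" by (rule box_dist[OF that])
    then have A: "dist x p \<le> 4*\<delta>" by simp
    have "min e0 e1 \<le> e0" "min e0 e1 \<le> e1" "min e0 e1 > 0" using e0 e1 by auto
    then have "dist x p < e0" "dist x p < e1" using A \<delta>_def by linarith+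
    then have "x \<in> ball p e0" by (simp add: dist_commute)
    then have "x \<in> S" using e0(2) by blast
    moreover have "P x" using e1(2) \<open>dist x p < e1\<close> by blast
    ultimately show ?thesis by blast
  qed
  then show ?thesis using dp by blast
qed

lemma box_compact:
  "compact {x::real\<times>real. \<bar>fst x - a\<bar> \<le> d \<and> \<bar>snd x - b\<bar> \<le> d}"
proof -
  have "{x::real\<times>real. \<bar>fst x - a\<bar> \<le> d \<and> \<bar>snd x - b\<bar> \<le> d} = {a-d..a+d} \<times> {b-d..b+d}"
    by (auto simp: abs_le_iff)
  then show ?thesis by (simp add: compact_Times)
qed

context
  fixes I :: "real set" and u q :: "real \<Rightarrow> real" and S :: "(real \<times> real) set"
    and U Q G V :: "real \<times> real \<Rightarrow> real"
  assumes Iint: "is_interval I"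
    and Sopen: "open S"
    and traj: "\<And>t. t \<in> I \<Longrightarrow> (u t, q t) \<in> S"
    and du: "\<And>t. t \<in> I \<Longrightarrow> (u has_real_derivative U (u t, q t)) (at t)"
    and dq: "\<And>t. t \<in> I \<Longrightarrow> (q has_real_derivative Q (u t, q t)) (at t)"
    and dW: "\<And>t. t \<in> I \<Longrightarrow> ((\<lambda>t. V (u t, q t)) has_real_derivative G (u t, q t)) (at t)"
    and Gnn: "\<And>x. x \<in> S \<Longrightarrow> G x \<ge> 0"
    and cU: "continuous_on S U" and cQ: "continuous_on S Q"
    and cG: "continuous_on S G" and cV: "continuous_on S V"
begin

lemma W_mono:
  assumes "t \<in> I" "t' \<in> I" "t \<le> t'"
  shows "V (u t, q t) \<le> V (u t', q t')"
proof (cases "t = t'")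
  case False
  then have lt: "t < t'" using assms by simp
  have "x \<in> I" if "t \<le> x" "x \<le> t'" for x using interval_sub[OF Iint assms(1,2)] that by auto
  then obtain z where z: "t < z" "z < t'" "V (u t', q t') - V (u t, q t) = (t' - t) * G (u z, q z)"
    using MVT2[OF lt, of "\<lambda>t. V (u t, q t)" "\<lambda>t. G (u t, q t)"] dW by blast
  have "z \<in> I" using \<open>\<And>x. t \<le> x \<Longrightarrow> x \<le> t' \<Longrightarrow> x \<in> I\<close> z by auto
  then have "G (u z, q z) \<ge> 0" using Gnn traj by blast
  then have "(t' - t) * G (u z, q z) \<ge> 0" using lt by simp
  then show ?thesis using z by linarith
qed simp

lemma box_bound:
  assumes "\<delta> > 0" "\<forall>x. \<bar>fst x - a\<bar> \<le> 2*\<delta> \<and> \<bar>snd x - b\<bar> \<le> 2*\<delta> \<longrightarrow> x \<in> S"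
  shows "\<exists>M>0. \<forall>x. \<bar>fst x - a\<bar> \<le> 2*\<delta> \<longrightarrow> \<bar>snd x - b\<bar> \<le> 2*\<delta> \<longrightarrow> \<bar>U x\<bar> \<le> M \<and> \<bar>Q x\<bar> \<le> M"
proof -
  define K where "K = {x::real\<times>real. \<bar>fst x - a\<bar> \<le> 2*\<delta> \<and> \<bar>snd x - b\<bar> \<le> 2*\<delta>}"
  have KS: "K \<subseteq> S" using assms(2) unfolding K_def by auto
  have cK: "compact K" unfolding K_def by (rule box_compact)
  obtain M1 where M1: "M1 > 0" "\<forall>x\<in>K. \<bar>U x\<bar> \<le> M1"
    using cont_bound[OF cK continuous_on_subset[OF cU KS]] by blast
  obtain M2 where M2: "M2 > 0" "\<forall>x\<in>K. \<bar>Q x\<bar> \<le> M2"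
    using cont_bound[OF cK continuous_on_subset[OF cQ KS]] by blast
  show ?thesis
    apply (rule exI[of _ "max M1 M2"])
    using M1 M2 unfolding K_def by force
qed

lemma G_zero:
  fixes s :: "nat \<Rightarrow> real"
  assumes sI: "\<And>k. s k \<in> I" and sinf: "filterlim s at_top sequentially"
    and lim: "(\<lambda>k. (u (s k), q (s k))) \<longlonglongrightarrow> p" and pS: "p \<in> S"
  shows "G p = 0"
proof (rule ccontr)
  assume "G p \<noteq> 0"
  then have Gp: "G p > 0" using Gnn[OF pS] by simp
  have isV: "isCont V p" and isG: "isCont G p"
    using cV cG pS Sopen continuous_on_eq_continuous_at by blast+
  have Wlim: "(\<lambda>k. V (u (s k), q (s k))) \<longlonglongrightarrow> V p"
    using isCont_tendsto_compose[OF isV lim] .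
  have Wle: "V (u t, q t) \<le> V p" if tI: "t \<in> I" for t
  proof (rule LIMSEQ_le_const[OF Wlim])
    have "eventually (\<lambda>k. s k \<ge> t) sequentially" using sinf by (simp add: filterlim_at_top)
    then obtain N where "\<forall>k\<ge>N. s k \<ge> t" unfolding eventually_sequentially by blast
    then show "\<exists>N. \<forall>n\<ge>N. V (u t, q t) \<le> V (u (s n), q (s n))"
      using W_mono[OF tI sI] by blast
  qed
  have "\<exists>e>0. \<forall>x. dist x p < e \<longrightarrow> G x > G p / 2"
  proof -
    obtain e where "e > 0" "\<forall>x. dist x p < e \<longrightarrow> dist (G x) (G p) < G p / 2"
      using isG[unfolded continuous_at_eps_delta] Gp by (meson half_gt_zero)
    note ee = this
    have "G x > G p / 2" if "dist x p < e" for x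
    proof -
      have "dist (G x) (G p) < G p / 2" using ee(2) that by blast
      then have "\<bar>G x - G p\<bar> < G p / 2" by (simp add: dist_real_def)
      then show ?thesis by linarith
    qed
    then show ?thesis using ee(1) by blast
  qed
  from ball_box[OF Sopen pS this] obtain \<delta> where d: "\<delta> > 0"
    and dK: "\<forall>x. \<bar>fst x - fst p\<bar> \<le> 2*\<delta> \<and> \<bar>snd x - snd p\<bar> \<le> 2*\<delta> \<longrightarrow> x \<in> S \<and> G x > G p / 2"
    by blast
  obtain M where M: "M > 0" "\<forall>x. \<bar>fst x - fst p\<bar> \<le> 2*\<delta> \<longrightarrow> \<bar>snd x - snd p\<bar> \<le> 2*\<delta> \<longrightarrow> \<bar>U x\<bar> \<le> M \<and> \<bar>Q x\<bar> \<le> M"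
    using box_bound[OF d] dK by blast
  define h where "h = \<delta> / M"
  have hpos: "h > 0" using d M by (simp add: h_def)
  have ev1: "eventually (\<lambda>k. \<bar>u (s k) - fst p\<bar> < \<delta>) sequentially"
  proof -
    have "(\<lambda>k. u (s k)) \<longlonglongrightarrow> fst p" using tendsto_fst[OF lim] by simp
    then show ?thesis using d by (auto simp: tendsto_iff dist_real_def)
  qed
  have ev2: "eventually (\<lambda>k. \<bar>q (s k) - snd p\<bar> < \<delta>) sequentially"
  proof -
    have "(\<lambda>k. q (s k)) \<longlonglongrightarrow> snd p" using tendsto_snd[OF lim] by simp
    then show ?thesis using d by (auto simp: tendsto_iff dist_real_def)
  qed
  have ev3: "eventually (\<lambda>k. V (u (s k), q (s k)) > V p - h * (G p / 2)) sequentially"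
    using Wlim hpos Gp by (intro order_tendstoD(1)) auto
  obtain k where k: "\<bar>u (s k) - fst p\<bar> < \<delta>" "\<bar>q (s k) - snd p\<bar> < \<delta>"
      "V (u (s k), q (s k)) > V p - h * (G p / 2)"
    using eventually_happens[OF eventually_conj[OF ev1 eventually_conj[OF ev2 ev3]]] by auto
  have "eventually (\<lambda>j. s j \<ge> s k + h) sequentially" using sinf by (simp add: filterlim_at_top)
  then obtain j where "s j \<ge> s k + h" unfolding eventually_sequentially by blast
  then have shI: "s k + h \<in> I" using interval_sub[OF Iint sI sI, of k j] hpos by auto
  have stay: "\<forall>t\<in>{s k..s k+h}. \<bar>u t - fst p\<bar> < 2*\<delta> \<and> \<bar>q t - snd p\<bar> < 2*\<delta>"
    using box_stay[OF Iint du dq d M(1), of "fst p" "snd p" "s k"] M(2) sI shI k unfolding h_def by blast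
  have sub: "{s k..s k+h} \<subseteq> I" by (rule interval_sub[OF Iint sI shI])
  have lt: "s k < s k + h" using hpos by simp
  obtain z where z: "s k < z" "z < s k + h"
      "V (u (s k + h), q (s k + h)) - V (u (s k), q (s k)) = (s k + h - s k) * G (u z, q z)"
    using MVT2[OF lt, of "\<lambda>t. V (u t, q t)" "\<lambda>t. G (u t, q t)"] dW sub by (meson atLeastAtMost_iff subsetD)
  have "\<bar>u z - fst p\<bar> < 2*\<delta> \<and> \<bar>q z - snd p\<bar> < 2*\<delta>" using stay z by auto
  then have "G (u z, q z) > G p / 2" using dK[rule_format, of "(u z, q z)"] by simp
  then have "V (u (s k + h), q (s k + h)) > V (u (s k), q (s k)) + h * (G p / 2)"
    using z(3) mult_strict_left_mono[OF \<open>G (u z, q z) > G p / 2\<close> hpos] by simp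
  with k(3) have "V (u (s k + h), q (s k + h)) > V p" by linarith
  with Wle[OF shI] show False by linarith
qed

lemma Q_zero:
  fixes t :: "nat \<Rightarrow> real"
  assumes tI: "\<And>k. t k \<in> I" and tinf: "filterlim t at_top sequentially"
    and lim: "(\<lambda>k. (u (t k), q (t k))) \<longlonglongrightarrow> p" and pS: "p \<in> S"
    and zero: "\<And>x. x \<in> S \<Longrightarrow> G x = 0 \<Longrightarrow> snd x = c"
  shows "Q p = 0"
proof (rule ccontr)
  assume Qp0: "Q p \<noteq> 0"
  define m where "m = \<bar>Q p\<bar>"
  have mpos: "m > 0" using Qp0 by (simp add: m_def)
  have pc: "snd p = c" using zero[OF pS G_zero[OF tI tinf lim pS]] .
  have isQ: "isCont Q p" using cQ pS Sopen continuous_on_eq_continuous_at by blast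
  have "\<exists>e>0. \<forall>x. dist x p < e \<longrightarrow> \<bar>Q x\<bar> > m / 2"
  proof -
    obtain e where ee: "e > 0" "\<forall>x. dist x p < e \<longrightarrow> dist (Q x) (Q p) < m / 2"
      using isQ[unfolded continuous_at_eps_delta] mpos by (meson half_gt_zero)
    have "\<bar>Q x\<bar> > m / 2" if "dist x p < e" for x
    proof -
      have "dist (Q x) (Q p) < m / 2" using ee(2) that by blast
      then have "\<bar>Q x - Q p\<bar> < m / 2" by (simp add: dist_real_def)
      then show ?thesis unfolding m_def by linarith
    qed
    then show ?thesis using ee(1) by blast
  qed
  from ball_box[OF Sopen pS this] obtain \<delta> where d: "\<delta> > 0"
    and dK: "\<forall>x. \<bar>fst x - fst p\<bar> \<le> 2*\<delta> \<and> \<bar>snd x - snd p\<bar> \<le> 2*\<delta> \<longrightarrow> x \<in> S \<and> \<bar>Q x\<bar> > m / 2"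
    by blast
  obtain M where M: "M > 0" "\<forall>x. \<bar>fst x - fst p\<bar> \<le> 2*\<delta> \<longrightarrow> \<bar>snd x - snd p\<bar> \<le> 2*\<delta> \<longrightarrow> \<bar>U x\<bar> \<le> M \<and> \<bar>Q x\<bar> \<le> M"
    using box_bound[OF d] dK by blast
  define h where "h = \<delta> / M"
  have hpos: "h > 0" using d M by (simp add: h_def)
  have limu: "(\<lambda>k. u (t k)) \<longlonglongrightarrow> fst p" using tendsto_fst[OF lim] by simp
  have limq: "(\<lambda>k. q (t k)) \<longlonglongrightarrow> snd p" using tendsto_snd[OF lim] by simp
  have ev1: "eventually (\<lambda>k. \<bar>u (t k) - fst p\<bar> < \<delta>) sequentially"
    using limu d by (auto simp: tendsto_iff dist_real_def)
  have ev2: "eventually (\<lambda>k. \<bar>q (t k) - snd p\<bar> < \<delta>) sequentially"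
    using limq d by (auto simp: tendsto_iff dist_real_def)
  obtain N where N: "\<forall>k\<ge>N. \<bar>u (t k) - fst p\<bar> < \<delta> \<and> \<bar>q (t k) - snd p\<bar> < \<delta>"
    using eventually_conj[OF ev1 ev2] unfolding eventually_sequentially by blast
  have thI: "t k + h \<in> I" for k
  proof -
    have "eventually (\<lambda>j. t j \<ge> t k + h) sequentially" using tinf by (simp add: filterlim_at_top)
    then obtain j where "t j \<ge> t k + h" unfolding eventually_sequentially by blast
    then show ?thesis using interval_sub[OF Iint tI tI, of k j] hpos by auto
  qed
  have stay: "\<forall>s\<in>{t k..t k+h}. \<bar>u s - fst p\<bar> < 2*\<delta> \<and> \<bar>q s - snd p\<bar> < 2*\<delta>" if "k \<ge> N" for k
    using box_stay[OF Iint du dq d M(1), of "fst p" "snd p" "t k"] M(2) tI thI N that unfolding h_def by blast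
  have jump: "\<bar>q (t k + h) - q (t k)\<bar> > h * (m / 2)" if "k \<ge> N" for k
  proof -
    have sub: "{t k..t k+h} \<subseteq> I" by (rule interval_sub[OF Iint tI thI])
    have lt: "t k < t k + h" using hpos by simp
    obtain z where z: "t k < z" "z < t k + h"
        "q (t k + h) - q (t k) = (t k + h - t k) * Q (u z, q z)"
      using MVT2[OF lt, of q "\<lambda>s. Q (u s, q s)"] dq sub by (meson atLeastAtMost_iff subsetD)
    have "\<bar>u z - fst p\<bar> < 2*\<delta> \<and> \<bar>q z - snd p\<bar> < 2*\<delta>" using stay[OF that] z by auto
    then have "\<bar>Q (u z, q z)\<bar> > m / 2" using dK[rule_format, of "(u z, q z)"] by simp
    then have "h * \<bar>Q (u z, q z)\<bar> > h * (m / 2)" using mult_strict_left_mono hpos by blast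
    then show ?thesis using z(3) hpos by (simp add: abs_mult)
  qed
  define K where "K = {x::real\<times>real. \<bar>fst x - fst p\<bar> \<le> 2*\<delta> \<and> \<bar>snd x - snd p\<bar> \<le> 2*\<delta>}"
  have cK: "compact K" unfolding K_def by (rule box_compact)
  define y where "y = (\<lambda>k. (u (t (k + N) + h), q (t (k + N) + h)))"
  have yK: "y k \<in> K" for k
  proof -
    have "t (k + N) + h \<in> {t (k + N)..t (k + N) + h}" using hpos by simp
    then have "\<bar>u (t (k + N) + h) - fst p\<bar> < 2*\<delta> \<and> \<bar>q (t (k + N) + h) - snd p\<bar> < 2*\<delta>"
      using stay[of "k + N"] by auto
    then show ?thesis unfolding y_def K_def by simp
  qed
  obtain l r where lK: "l \<in> K" and r: "strict_mono r" and ylim: "(y \<circ> r) \<longlonglongrightarrow> l"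
    using compact_imp_seq_compact[OF cK] yK unfolding seq_compact_def by metis
  have lS: "l \<in> S" using lK dK unfolding K_def by blast
  define s where "s = (\<lambda>j. t (r j + N) + h)"
  have sI: "s j \<in> I" for j unfolding s_def by (rule thI)
  have rN: "filterlim (\<lambda>j. r j + N) sequentially sequentially"
    using filterlim_subseq[OF r] by (rule filterlim_add_const_nat_at_top[THEN filterlim_compose])
  have tr: "filterlim (\<lambda>j. t (r j + N)) at_top sequentially"
    using filterlim_compose[OF tinf rN] by (simp add: o_def)
  have sinf: "filterlim s at_top sequentially"
    unfolding s_def using filterlim_tendsto_add_at_top[OF tendsto_const tr, of h] by (simp add: add.commute)
  have slim: "(\<lambda>j. (u (s j), q (s j))) \<longlonglongrightarrow> l"
    using ylim unfolding s_def y_def o_def .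
  have lc: "snd l = c" using zero[OF lS G_zero[OF sI sinf slim lS]] .
  have q1: "(\<lambda>j. q (s j)) \<longlonglongrightarrow> c" using tendsto_snd[OF slim] lc by simp
  have q2: "(\<lambda>j. q (t (r j + N))) \<longlonglongrightarrow> c"
    using filterlim_compose[OF limq rN] pc by (simp add: o_def)
  have dlim: "(\<lambda>j. q (s j) - q (t (r j + N))) \<longlonglongrightarrow> 0" using tendsto_diff[OF q1 q2] by simp
  moreover define e where "e = h * (m / 2)"
  moreover have epos: "e > 0" using hpos mpos by (simp add: e_def)
  ultimately have "eventually (\<lambda>j. \<bar>q (s j) - q (t (r j + N))\<bar> < e) sequentially"
    using tendsto_iff[THEN iffD1, rule_format, OF dlim epos] by (simp add: dist_real_def)
  then obtain j where "\<bar>q (s j) - q (t (r j + N))\<bar> < e" unfolding eventually_sequentially by blast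
  moreover have "\<bar>q (s j) - q (t (r j + N))\<bar> > e" unfolding s_def e_def by (rule jump) simp
  ultimately show False by linarith
qed

end

lemma fwd:
  fixes I :: "real set" and u q :: "real \<Rightarrow> real" and S :: "(real \<times> real) set"
    and U Q G V :: "real \<times> real \<Rightarrow> real" and t :: "nat \<Rightarrow> real"
  assumes Iint: "is_interval I"
    and Sopen: "open S"
    and traj: "\<And>t. t \<in> I \<Longrightarrow> (u t, q t) \<in> S"
    and du: "\<And>t. t \<in> I \<Longrightarrow> (u has_real_derivative U (u t, q t)) (at t)"
    and dq: "\<And>t. t \<in> I \<Longrightarrow> (q has_real_derivative Q (u t, q t)) (at t)"
    and dW: "\<And>t. t \<in> I \<Longrightarrow> ((\<lambda>t. V (u t, q t)) has_real_derivative G (u t, q t)) (at t)"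
    and sgn: "(\<forall>x\<in>S. G x \<ge> 0) \<or> (\<forall>x\<in>S. G x \<le> 0)"
    and cU: "continuous_on S U" and cQ: "continuous_on S Q"
    and cG: "continuous_on S G" and cV: "continuous_on S V"
    and zero: "\<And>x. x \<in> S \<Longrightarrow> G x = 0 \<Longrightarrow> snd x = c"
    and tI: "\<And>k. t k \<in> I" and tinf: "filterlim t at_top sequentially"
    and lim: "(\<lambda>k. (u (t k), q (t k))) \<longlonglongrightarrow> p" and pS: "p \<in> S"
  shows "Q p = 0 \<and> snd p = c"
proof (cases "\<forall>x\<in>S. G x \<ge> 0")
  case True
  then have Gnn: "\<And>x. x \<in> S \<Longrightarrow> G x \<ge> 0" by blast
  show ?thesis
    using Q_zero[OF Iint Sopen traj du dq dW Gnn cU cQ cG cV tI tinf lim pS zero]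
      zero[OF pS G_zero[OF Iint Sopen traj du dq dW Gnn cU cQ cG cV tI tinf lim pS]] by blast
next
  case False
  then have Gnn: "\<And>x. x \<in> S \<Longrightarrow> - G x \<ge> 0" using sgn by auto
  have dW': "((\<lambda>t. - V (u t, q t)) has_real_derivative - G (u t, q t)) (at t)" if "t \<in> I" for t
    using DERIV_minus[OF dW[OF that]] .
  have cG': "continuous_on S (\<lambda>x. - G x)" using cG by (rule continuous_on_minus)
  have cV': "continuous_on S (\<lambda>x. - V x)" using cV by (rule continuous_on_minus)
  have zero': "\<And>x. x \<in> S \<Longrightarrow> - G x = 0 \<Longrightarrow> snd x = c" using zero by simp
  show ?thesis
    using Q_zero[where V="\<lambda>x. - V x" and G="\<lambda>x. - G x", OF Iint Sopen traj du dq dW' Gnn cU cQ cG' cV' tI tinf lim pS zero']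
      zero'[OF pS G_zero[where V="\<lambda>x. - V x" and G="\<lambda>x. - G x", OF Iint Sopen traj du dq dW' Gnn cU cQ cG' cV' tI tinf lim pS]] by blast
qed

lemma bwd:
  fixes I :: "real set" and u q :: "real \<Rightarrow> real" and S :: "(real \<times> real) set"
    and U Q G V :: "real \<times> real \<Rightarrow> real" and t :: "nat \<Rightarrow> real"
  assumes Iint: "is_interval I"
    and Sopen: "open S"
    and traj: "\<And>t. t \<in> I \<Longrightarrow> (u t, q t) \<in> S"
    and du: "\<And>t. t \<in> I \<Longrightarrow> (u has_real_derivative U (u t, q t)) (at t)"
    and dq: "\<And>t. t \<in> I \<Longrightarrow> (q has_real_derivative Q (u t, q t)) (at t)"
    and dW: "\<And>t. t \<in> I \<Longrightarrow> ((\<lambda>t. V (u t, q t)) has_real_derivative G (u t, q t)) (at t)"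
    and sgn: "(\<forall>x\<in>S. G x \<ge> 0) \<or> (\<forall>x\<in>S. G x \<le> 0)"
    and cU: "continuous_on S U" and cQ: "continuous_on S Q"
    and cG: "continuous_on S G" and cV: "continuous_on S V"
    and zero: "\<And>x. x \<in> S \<Longrightarrow> G x = 0 \<Longrightarrow> snd x = c"
    and tI: "\<And>k. t k \<in> I" and tinf: "filterlim t at_bot sequentially"
    and lim: "(\<lambda>k. (u (t k), q (t k))) \<longlonglongrightarrow> p" and pS: "p \<in> S"
  shows "Q p = 0 \<and> snd p = c"
proof -
  have Iint': "is_interval (uminus ` I)"
  proof -
    have "(\<lambda>x. 0 - x) ` I = uminus ` I" by simp
    then show ?thesis using is_interval_neg_translationI[OF Iint, of 0] by simp
  qed
  have mem: "- t \<in> I" if "t \<in> uminus ` I" for t using that by auto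
  have traj': "(u (- t), q (- t)) \<in> S" if "t \<in> uminus ` I" for t using traj[OF mem[OF that]] .
  have du': "((\<lambda>t. u (- t)) has_real_derivative - U (u (- t), q (- t))) (at t)" if "t \<in> uminus ` I" for t
    using du[OF mem[OF that]] DERIV_mirror by blast
  have dq': "((\<lambda>t. q (- t)) has_real_derivative - Q (u (- t), q (- t))) (at t)" if "t \<in> uminus ` I" for t
    using dq[OF mem[OF that]] DERIV_mirror by blast
  have dW': "((\<lambda>t. V (u (- t), q (- t))) has_real_derivative - G (u (- t), q (- t))) (at t)" if "t \<in> uminus ` I" for t
    using dW[OF mem[OF that]] DERIV_mirror[of "\<lambda>t. V (u t, q t)"] by blast
  have sgn': "(\<forall>x\<in>S. - G x \<ge> 0) \<or> (\<forall>x\<in>S. - G x \<le> 0)" using sgn by auto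
  have cU': "continuous_on S (\<lambda>x. - U x)" using cU by (rule continuous_on_minus)
  have cQ': "continuous_on S (\<lambda>x. - Q x)" using cQ by (rule continuous_on_minus)
  have cG': "continuous_on S (\<lambda>x. - G x)" using cG by (rule continuous_on_minus)
  have zero': "\<And>x. x \<in> S \<Longrightarrow> - G x = 0 \<Longrightarrow> snd x = c" using zero by simp
  have tI': "- t k \<in> uminus ` I" for k using tI by auto
  have tinf': "filterlim (\<lambda>k. - t k) at_top sequentially" using tinf by (simp add: filterlim_uminus_at_bot)
  have lim': "(\<lambda>k. (u (- (- t k)), q (- (- t k)))) \<longlonglongrightarrow> p" using lim by simp
  have "- Q p = 0 \<and> snd p = c"
    by (rule fwd[where u="\<lambda>t. u (- t)" and q="\<lambda>t. q (- t)" and U="\<lambda>x. - U x" and Q="\<lambda>x. - Q x"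
        and G="\<lambda>x. - G x" and V=V and t="\<lambda>k. - t k",
        OF Iint' Sopen traj' du' dq' dW' sgn' cU' cQ' cG' cV zero' tI' tinf' lim' pS])
  then show ?thesis by simp
qed


theorem mainTheorem10:
  fixes n0 :: real and I :: "real set" and u q :: "real \<Rightarrow> real"
  assumes n0: "n0 > 3"
    and I: "is_interval I" "open I" "I \<noteq> {}"
    and pos: "\<And>\<xi>. \<xi> \<in> I \<Longrightarrow> u \<xi> > 0 \<and> q \<xi> > 0"
    and du: "\<And>\<xi>. \<xi> \<in> I \<Longrightarrow> (u has_real_derivative u \<xi> * (3 - u \<xi> - n0 * q \<xi>)) (at \<xi>)"
    and dq: "\<And>\<xi>. \<xi> \<in> I \<Longrightarrow> (q has_real_derivative q \<xi> * (-1 + u \<xi> + q \<xi>)) (at \<xi>)"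
  shows "(\<forall>\<xi>\<in>I. ((\<lambda>x. Psi n0 (u x) (q x)) has_real_derivative
            (n0 - 5) * (n0 - 1) powr (-3) * (u \<xi> * q \<xi>) powr (2 / (n0 - 1))
              * ((n0 - 1) * q \<xi> - 2)^2) (at \<xi>))
       \<and> (n0 \<noteq> 5 \<longrightarrow>
            (mono_on I (\<lambda>x. Psi n0 (u x) (q x)) \<or> antimono_on I (\<lambda>x. Psi n0 (u x) (q x)))
          \<and> (omega_limit I u q \<noteq> {} \<and> omega_limit I u q \<subseteq> {p. fst p > 0 \<and> snd p > 0}
               \<longrightarrow> omega_limit I u q = {((n0 - 3) / (n0 - 1), 2 / (n0 - 1))})
          \<and> (alpha_limit I u q \<noteq> {} \<and> alpha_limit I u q \<subseteq> {p. fst p > 0 \<and> snd p > 0}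
               \<longrightarrow> alpha_limit I u q = {((n0 - 3) / (n0 - 1), 2 / (n0 - 1))}))"
proof -
  define S where "S = {p::real\<times>real. fst p > 0 \<and> snd p > 0}"
  define U where "U = (\<lambda>x::real\<times>real. fst x * (3 - fst x - n0 * snd x))"
  define Q where "Q = (\<lambda>x::real\<times>real. snd x * (-1 + fst x + snd x))"
  define G where "G = (\<lambda>x::real\<times>real. (n0 - 5) * (n0 - 1) powr (-3) * (fst x * snd x) powr (2 / (n0 - 1))
              * ((n0 - 1) * snd x - 2)^2)"
  define V where "V = (\<lambda>x::real\<times>real. Psi n0 (fst x) (snd x))"
  have D: "\<forall>\<xi>\<in>I. ((\<lambda>x. Psi n0 (u x) (q x)) has_real_derivative
            (n0 - 5) * (n0 - 1) powr (-3) * (u \<xi> * q \<xi>) powr (2 / (n0 - 1))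
              * ((n0 - 1) * q \<xi> - 2)^2) (at \<xi>)"
    using dpsi[OF n0] pos du dq by blast
  have Sopen: "open S" unfolding S_def
    by (intro open_Collect_conj open_Collect_less continuous_intros)
  have traj: "\<And>t. t \<in> I \<Longrightarrow> (u t, q t) \<in> S" using pos unfolding S_def by simp
  have du': "\<And>t. t \<in> I \<Longrightarrow> (u has_real_derivative U (u t, q t)) (at t)" using du unfolding U_def by simp
  have dq': "\<And>t. t \<in> I \<Longrightarrow> (q has_real_derivative Q (u t, q t)) (at t)" using dq unfolding Q_def by simp
  have dW: "\<And>t. t \<in> I \<Longrightarrow> ((\<lambda>t. V (u t, q t)) has_real_derivative G (u t, q t)) (at t)"
    using D unfolding V_def G_def by simp
  have cU: "continuous_on S U" unfolding U_def by (intro continuous_intros)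
  have cQ: "continuous_on S Q" unfolding Q_def by (intro continuous_intros)
  have cG: "continuous_on S G" unfolding G_def S_def
    by (intro continuous_intros) auto
  have cV: "continuous_on S V" unfolding V_def S_def Psi_def
    using n0 by (intro continuous_intros) auto
  have c3: "(n0 - 1) powr (-3) > 0" using n0 by simp
  have Gsgn: "G x \<ge> 0 \<longleftrightarrow> n0 \<ge> 5" if "x \<in> S" "(n0 - 1) * snd x - 2 \<noteq> 0" for x
  proof -
    have "(fst x * snd x) powr (2 / (n0 - 1)) > 0" using that unfolding S_def by simp
    moreover have "((n0 - 1) * snd x - 2)^2 > 0" using that by simp
    ultimately have "(n0 - 1) powr (-3) * (fst x * snd x) powr (2 / (n0 - 1)) * ((n0 - 1) * snd x - 2)^2 > 0"
      using c3 by simp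
    then show ?thesis unfolding G_def by (simp add: zero_le_mult_iff mult.assoc)
  qed
  have G0: "G x = 0" if "(n0 - 1) * snd x - 2 = 0" for x unfolding G_def using that by simp
  have sgn: "(\<forall>x\<in>S. G x \<ge> 0) \<or> (\<forall>x\<in>S. G x \<le> 0)"
  proof (cases "n0 \<ge> 5")
    case True
    then have "\<forall>x\<in>S. G x \<ge> 0" using Gsgn G0 by (metis order_refl)
    then show ?thesis by blast
  next
    case False
    then have "\<forall>x\<in>S. G x \<le> 0" using Gsgn G0 by (metis linorder_le_cases)
    then show ?thesis by blast
  qed
  show ?thesis
  proof (intro conjI impI D)
    assume n5: "n0 \<noteq> 5"
    define c where "c = 2 / (n0 - 1)"
    have zero: "\<And>x. x \<in> S \<Longrightarrow> G x = 0 \<Longrightarrow> snd x = c"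
    proof -
      fix x assume xS: "x \<in> S" and Gx: "G x = 0"
      have "(fst x * snd x) powr (2 / (n0 - 1)) > 0" using xS unfolding S_def by simp
      then have "((n0 - 1) * snd x - 2)^2 = 0" using Gx c3 n5 unfolding G_def by simp
      then show "snd x = c" using n0 unfolding c_def by (simp add: field_simps)
    qed
    have fixpt: "p = ((n0 - 3) / (n0 - 1), 2 / (n0 - 1))" if "Q p = 0 \<and> snd p = c" "p \<in> S" for p
    proof -
      have sp: "snd p > 0" using that(2) unfolding S_def by simp
      have "snd p * (-1 + fst p + snd p) = 0" using that(1) unfolding Q_def by auto
      then have "-1 + fst p + snd p = 0" using sp by simp
      then have "fst p = (n0 - 3) / (n0 - 1)" using that(1) n0 unfolding c_def by (simp add: field_simps)
      then show ?thesis using that(1) unfolding c_def by (cases p) simp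
    qed
    show "mono_on I (\<lambda>x. Psi n0 (u x) (q x)) \<or> antimono_on I (\<lambda>x. Psi n0 (u x) (q x))"
    proof (cases "\<forall>x\<in>S. G x \<ge> 0")
      case True
      then have Gnn: "\<And>x. x \<in> S \<Longrightarrow> G x \<ge> 0" by blast
      have "mono_on I (\<lambda>x. Psi n0 (u x) (q x))"
        unfolding mono_on_def
        using W_mono[OF I(1) Sopen traj du' dq' dW Gnn cU cQ cG cV] unfolding V_def by auto
      then show ?thesis by blast
    next
      case False
      then have Gnn: "\<And>x. x \<in> S \<Longrightarrow> - G x \<ge> 0" using sgn by auto
      have dW': "((\<lambda>t. - V (u t, q t)) has_real_derivative - G (u t, q t)) (at t)" if "t \<in> I" for t
        using DERIV_minus[OF dW[OF that]] .
      have cG': "continuous_on S (\<lambda>x. - G x)" using cG by (rule continuous_on_minus)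
      have cV': "continuous_on S (\<lambda>x. - V x)" using cV by (rule continuous_on_minus)
      have "antimono_on I (\<lambda>x. Psi n0 (u x) (q x))"
        unfolding monotone_on_def
        using W_mono[where V="\<lambda>x. - V x" and G="\<lambda>x. - G x", OF I(1) Sopen traj du' dq' dW' Gnn cU cQ cG' cV']
        unfolding V_def by auto
      then show ?thesis by blast
    qed
    show "omega_limit I u q = {((n0 - 3) / (n0 - 1), 2 / (n0 - 1))}"
      if "omega_limit I u q \<noteq> {} \<and> omega_limit I u q \<subseteq> {p. fst p > 0 \<and> snd p > 0}"
    proof -
      have all: "p = ((n0 - 3) / (n0 - 1), 2 / (n0 - 1))" if pm: "p \<in> omega_limit I u q" for p
      proof -
        have pS: "p \<in> S" using pm \<open>omega_limit I u q \<noteq> {} \<and> omega_limit I u q \<subseteq> _\<close> unfolding S_def by blast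
        obtain t where t: "\<forall>k. t k \<in> I" "filterlim t at_top sequentially"
          "(\<lambda>k. (u (t k), q (t k))) \<longlonglongrightarrow> p"
          using pm unfolding omega_limit_def by blast
        have "Q p = 0 \<and> snd p = c"
          using fwd[OF I(1) Sopen traj du' dq' dW sgn cU cQ cG cV zero _ t(2) t(3) pS] t(1) by blast
        then show ?thesis using fixpt pS by blast
      qed
      then show ?thesis using that by blast
    qed
    show "alpha_limit I u q = {((n0 - 3) / (n0 - 1), 2 / (n0 - 1))}"
      if "alpha_limit I u q \<noteq> {} \<and> alpha_limit I u q \<subseteq> {p. fst p > 0 \<and> snd p > 0}"
    proof -
      have all: "p = ((n0 - 3) / (n0 - 1), 2 / (n0 - 1))" if pm: "p \<in> alpha_limit I u q" for p
      proof -
        have pS: "p \<in> S" using pm \<open>alpha_limit I u q \<noteq> {} \<and> alpha_limit I u q \<subseteq> _\<close> unfolding S_def by blast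
        obtain t where t: "\<forall>k. t k \<in> I" "filterlim t at_bot sequentially"
          "(\<lambda>k. (u (t k), q (t k))) \<longlonglongrightarrow> p"
          using pm unfolding alpha_limit_def by blast
        have "Q p = 0 \<and> snd p = c"
          using bwd[OF I(1) Sopen traj du' dq' dW sgn cU cQ cG cV zero _ t(2) t(3) pS] t(1) by blast
        then show ?thesis using fixpt pS by blast
      qed
      then show ?thesis using that by blast
    qed
  qed
qed

end
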